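(* In the Bernoulli Matching model with $k=2$ and reach $r=1$, \[ \sum_{n\ge 0}\mathbf{EL}^B_{n,2,1}\,a^n \text{ has asymptotics } \quad \mathbf{EL}^B_{n,2,1}=\frac{8}{11}n-\frac{32}{121}+O\!\left(n\,2^{-2n}\right)\quad (n\to\infty); \] in particular $\gamma^B_{2,1}=\lim_{n\to\infty}\mathbf{EL}^B_{n,2,1}/n=\frac{8}{11}$.
   Context: Let $(\epsilon_{ij})_{i,j\ge1}$ be independent random variables with $\Pr(\epsilon_{ij}=1)=\Pr(\epsilon_{ij}=0)=1/2$. For $n\ge1$ and an integer $r\ge1$, let $\mathbf{R}_{n,r}$ be the largest $m$ such that there exist indices $1\le i_1<\dots<i_m\le n$ and $1\le j_1<\dots<j_m\le n$ with $\epsilon_{i_aj_a}=1$ and $|i_a-j_a|\le r$ for all $a$. Define $\mathbf{EL}^B_{n,2,r}=\mathbb{E}\,\mathbf{R}_{n,r}$. *)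

theory Defs
  imports Complex_Main "HOL-Library.Landau_Symbols"
begin

text \<open>A configuration of the Bernoulli variables relevant for size n:
  e i j = True means epsilon_ij = 1; entries outside [1,n]x[1,n] are fixed to False
  (they do not influence R_{n,r}), so uniform averaging over this finite set is the
  expectation with respect to i.i.d. fair Bernoulli variables.\<close>
definition configs :: "nat \<Rightarrow> (nat \<Rightarrow> nat \<Rightarrow> bool) set" where
  "configs n = {e. \<forall>i j. e i j \<longrightarrow> 1 \<le> i \<and> i \<le> n \<and> 1 \<le> j \<and> j \<le> n}"

definition valid_match :: "nat \<Rightarrow> nat \<Rightarrow> (nat \<Rightarrow> nat \<Rightarrow> bool) \<Rightarrow> (nat \<times> nat) list \<Rightarrow> bool" where
  "valid_match n r e ps \<longleftrightarrow>
     sorted_wrt (\<lambda>p q. fst p < fst q \<and> snd p < snd q) ps \<and>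
     (\<forall>p\<in>set ps. 1 \<le> fst p \<and> fst p \<le> n \<and> 1 \<le> snd p \<and> snd p \<le> n \<and>
        e (fst p) (snd p) \<and> \<bar>int (fst p) - int (snd p)\<bar> \<le> int r)"

definition R :: "nat \<Rightarrow> nat \<Rightarrow> (nat \<Rightarrow> nat \<Rightarrow> bool) \<Rightarrow> nat" where
  "R n r e = Max {length ps | ps. valid_match n r e ps}"

definition EL :: "nat \<Rightarrow> nat \<Rightarrow> real" where
  "EL n r = (\<Sum>e\<in>configs n. real (R n r e)) / real (card (configs n))"

end

theory Submission
  imports Defs
begin

definition cell :: "(nat \<Rightarrow> nat \<Rightarrow> bool) \<Rightarrow> nat \<Rightarrow> nat \<Rightarrow> nat" where
  "cell e i j = (if e i j \<and> i \<le> j + 1 \<and> j \<le> i + 1 then 1 else 0)"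

fun Lv :: "(nat \<Rightarrow> nat \<Rightarrow> bool) \<Rightarrow> nat \<Rightarrow> nat \<Rightarrow> nat" where
  "Lv e 0 j = 0"
| "Lv e (Suc i) 0 = 0"
| "Lv e (Suc i) (Suc j) = max (max (Lv e i (Suc j)) (Lv e (Suc i) j)) (Lv e i j + cell e (Suc i) (Suc j))"

lemma Lv_mono1: "Lv e i j \<le> Lv e (Suc i) j"
  by (cases i; cases j) auto

lemma Lv_mono2: "Lv e i j \<le> Lv e i (Suc j)"
  by (cases i) auto

lemma Lv_mono: assumes "i \<le> i'" "j \<le> j'" shows "Lv e i j \<le> Lv e i' j'"
proof -
  have "Lv e i j \<le> Lv e i' j"
    using lift_Suc_mono_le[of "\<lambda>k. Lv e k j", OF Lv_mono1 assms(1)] .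
  also have "\<dots> \<le> Lv e i' j'"
    using lift_Suc_mono_le[of "\<lambda>k. Lv e i' k", OF Lv_mono2 assms(2)] .
  finally show ?thesis .
qed

lemma Lv_col: "i + 1 \<le> j \<Longrightarrow> Lv e i (Suc j) = Lv e i j"
proof (induction i arbitrary: j)
  case 0 then show ?case by simp
next
  case (Suc i)
  then obtain j' where j: "j = Suc j'" by (cases j) auto
  have c: "cell e (Suc i) (Suc j) = 0" using Suc.prems by (simp add: cell_def)
  have ih: "Lv e i (Suc j) = Lv e i j" using Suc by simp
  show ?case using c ih Lv_mono1[of e i j] by (simp add: j max_def)
qed

lemma Lv_row: "j + 1 \<le> i \<Longrightarrow> Lv e (Suc i) j = Lv e i j"
proof (induction j arbitrary: i)
  case 0 then show ?case by (cases i) auto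
next
  case (Suc j)
  then obtain i' where i: "i = Suc i'" by (cases i) auto
  have c: "cell e (Suc i) (Suc j) = 0" using Suc.prems by (simp add: cell_def)
  have ih: "Lv e (Suc i) j = Lv e i j" using Suc by simp
  show ?case using c ih Lv_mono2[of e i j] by (simp add: i max_def)
qed

definition ok :: "(nat \<Rightarrow> nat \<Rightarrow> bool) \<Rightarrow> (nat \<times> nat) list \<Rightarrow> bool" where
  "ok e ps \<longleftrightarrow> sorted_wrt (\<lambda>p q. fst p < fst q \<and> snd p < snd q) ps \<and>
     (\<forall>p\<in>set ps. 1 \<le> fst p \<and> 1 \<le> snd p \<and> cell e (fst p) (snd p) = 1)"

definition box :: "nat \<Rightarrow> nat \<Rightarrow> (nat \<times> nat) list \<Rightarrow> bool" where
  "box i j ps \<longleftrightarrow> (\<forall>p\<in>set ps. fst p \<le> i \<and> snd p \<le> j)"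

lemma upper: "ok e ps \<Longrightarrow> box i j ps \<Longrightarrow> length ps \<le> Lv e i j"
proof (induction ps arbitrary: i j rule: rev_induct)
  case Nil then show ?case by simp
next
  case (snoc p qs)
  have "1 \<le> fst p" "1 \<le> snd p" using snoc.prems unfolding ok_def by auto
  then obtain a b where p: "p = (Suc a, Suc b)"
    by (metis Suc_pred' less_eq_Suc_le prod.collapse One_nat_def)
  have okq: "ok e qs" and lt: "\<forall>q\<in>set qs. fst q < Suc a \<and> snd q < Suc b"
    and c: "cell e (Suc a) (Suc b) = 1"
    using snoc.prems by (auto simp: ok_def sorted_wrt_append p)
  have "box a b qs" using lt by (auto simp: box_def)
  then have "length qs \<le> Lv e a b" using snoc.IH okq by blast
  moreover have "Lv e a b + 1 \<le> Lv e (Suc a) (Suc b)" using c by simp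
  moreover have "Lv e (Suc a) (Suc b) \<le> Lv e i j"
    using snoc.prems by (intro Lv_mono) (auto simp: box_def p)
  ultimately show ?case using c by simp
qed

lemma box_mono: "box i j ps \<Longrightarrow> i \<le> i' \<Longrightarrow> j \<le> j' \<Longrightarrow> box i' j' ps"
  by (auto simp: box_def)

lemma lower: "\<exists>ps. ok e ps \<and> box i j ps \<and> length ps = Lv e i j"
proof (induction e i j rule: Lv.induct)
  case (1 e j) then show ?case by (intro exI[of _ "[]"]) (simp add: ok_def box_def)
next
  case (2 e i) then show ?case by (intro exI[of _ "[]"]) (simp add: ok_def box_def)
next
  case (3 e i j)
  obtain p1 where p1: "ok e p1" "box i (Suc j) p1" "length p1 = Lv e i (Suc j)" using 3 by blast
  obtain p2 where p2: "ok e p2" "box (Suc i) j p2" "length p2 = Lv e (Suc i) j" using 3 by blast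
  obtain p3 where p3: "ok e p3" "box i j p3" "length p3 = Lv e i j" using 3 by blast
  have w3: "\<exists>ps. ok e ps \<and> box (Suc i) (Suc j) ps \<and> length ps = Lv e i j + cell e (Suc i) (Suc j)"
  proof (cases "cell e (Suc i) (Suc j) = 1")
    case True
    have "ok e (p3 @ [(Suc i, Suc j)])"
      using p3(1,2) True by (auto simp: ok_def box_def sorted_wrt_append)
    moreover have "box (Suc i) (Suc j) (p3 @ [(Suc i, Suc j)])"
      using p3(2) by (auto simp: box_def)
    ultimately show ?thesis using p3(3) True by (intro exI[of _ "p3 @ [(Suc i, Suc j)]"]) simp
  next
    case False
    then have "cell e (Suc i) (Suc j) = 0" by (simp add: cell_def split: if_splits)
    then show ?thesis using p3 box_mono[OF p3(2), of "Suc i" "Suc j"] by (intro exI[of _ p3]) simp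
  qed
  have w1: "\<exists>ps. ok e ps \<and> box (Suc i) (Suc j) ps \<and> length ps = Lv e i (Suc j)"
    using p1 by (intro exI[of _ p1]) (auto intro: box_mono)
  have w2: "\<exists>ps. ok e ps \<and> box (Suc i) (Suc j) ps \<and> length ps = Lv e (Suc i) j"
    using p2 by (intro exI[of _ p2]) (auto intro: box_mono)
  show ?case unfolding Lv.simps max_def using w1 w2 w3 by (auto split: if_splits)
qed

lemma valid_iff: "valid_match n 1 e ps \<longleftrightarrow> ok e ps \<and> box n n ps"
  unfolding valid_match_def ok_def box_def cell_def by auto

lemma R_Lv: "R n 1 e = Lv e n n"
proof -
  have eq: "{length ps | ps. valid_match n 1 e ps} = {length ps | ps. ok e ps \<and> box n n ps}"
    by (simp only: valid_iff)
  have "Max {length ps | ps. ok e ps \<and> box n n ps} = Lv e n n"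
  proof (rule Max_eqI)
    show "finite {length ps | ps. ok e ps \<and> box n n ps}"
      by (rule finite_subset[of _ "{..Lv e n n}"]) (auto dest: upper)
    show "\<And>y. y \<in> {length ps | ps. ok e ps \<and> box n n ps} \<Longrightarrow> y \<le> Lv e n n"
      by (auto dest: upper)
    show "Lv e n n \<in> {length ps | ps. ok e ps \<and> box n n ps}"
      using lower[of e n n] by (metis (mono_tags, lifting) mem_Collect_eq)
  qed
  then show ?thesis unfolding R_def eq .
qed

definition stepf :: "bool \<times> bool \<Rightarrow> bool \<Rightarrow> bool \<Rightarrow> bool \<Rightarrow> bool \<times> bool" where
  "stepf s x y z = (if fst s \<or> snd s \<or> x then (fst s \<and> y, snd s \<and> z) else (y, z))"

fun st :: "(nat \<Rightarrow> nat \<Rightarrow> bool) \<Rightarrow> nat \<Rightarrow> bool \<times> bool" where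
  "st e 0 = (False, False)"
| "st e (Suc i) = stepf (st e i) (e (Suc i) (Suc i)) (e (Suc i) (Suc (Suc i))) (e (Suc (Suc i)) (Suc i))"

fun Dv :: "(nat \<Rightarrow> nat \<Rightarrow> bool) \<Rightarrow> nat \<Rightarrow> nat" where
  "Dv e 0 = 0"
| "Dv e (Suc i) = Dv e i + (if fst (st e i) \<or> snd (st e i) \<or> e (Suc i) (Suc i) then 1 else 0)"

lemma link: "Lv e i i = Dv e i \<and> Lv e i (Suc i) = Dv e i + (if fst (st e i) then 1 else 0)
   \<and> Lv e (Suc i) i = Dv e i + (if snd (st e i) then 1 else 0)"
proof (induction i)
  case 0 then show ?case by simp
next
  case (Suc i)
  have a: "Lv e i (Suc (Suc i)) = Lv e i (Suc i)" by (rule Lv_col) simp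
  have b: "Lv e (Suc (Suc i)) i = Lv e (Suc i) i" by (rule Lv_row) simp
  obtain u l where s: "st e i = (u, l)" by (cases "st e i")
  show ?case using Suc a b s
    by (simp add: cell_def stepf_def max_def split: if_splits)
qed

lemma R_Dv: "R n 1 e = Dv e n"
  using R_Lv link by simp

definition upd :: "(nat \<Rightarrow> nat \<Rightarrow> bool) \<Rightarrow> nat \<Rightarrow> nat \<Rightarrow> bool \<Rightarrow> (nat \<Rightarrow> nat \<Rightarrow> bool)" where
  "upd e a b v = (\<lambda>i j. if i = a \<and> j = b then v else e i j)"

lemma configs_img: "configs n = (\<lambda>S i j. (i, j) \<in> S) ` Pow ({1..n} \<times> {1..n})"
proof
  show "configs n \<subseteq> (\<lambda>S i j. (i, j) \<in> S) ` Pow ({1..n} \<times> {1..n})"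
  proof
    fix e assume e: "e \<in> configs n"
    let ?S = "{p \<in> {1..n} \<times> {1..n}. e (fst p) (snd p)}"
    have "e = (\<lambda>i j. (i, j) \<in> ?S)" using e by (auto simp: configs_def fun_eq_iff)
    then show "e \<in> (\<lambda>S i j. (i, j) \<in> S) ` Pow ({1..n} \<times> {1..n})" by blast
  qed
  show "(\<lambda>S i j. (i, j) \<in> S) ` Pow ({1..n} \<times> {1..n}) \<subseteq> configs n"
    by (auto simp: configs_def)
qed

lemma configs_finite: "finite (configs n)"
  unfolding configs_img by simp

lemma configs_card: "card (configs n) > 0"
proof -
  have "(\<lambda>_ _. False) \<in> configs n" by (simp add: configs_def)
  then show ?thesis using configs_finite card_gt_0_iff by blast
qed

definition Ex :: "nat \<Rightarrow> ((nat \<Rightarrow> nat \<Rightarrow> bool) \<Rightarrow> real) \<Rightarrow> real" where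
  "Ex n F = (\<Sum>e\<in>configs n. F e) / real (card (configs n))"

lemma Ex_lin: "Ex n (\<lambda>e. c + a * f e + b * g e) = c + a * Ex n f + b * Ex n g"
proof -
  have nz: "card (configs n) \<noteq> 0" using configs_card by simp
  show ?thesis unfolding Ex_def
    by (simp add: sum.distrib sum_distrib_left[symmetric] add_divide_distrib nz)
qed

lemma Ex_add: "Ex n (\<lambda>e. f e + g e) = Ex n f + Ex n g"
  using Ex_lin[of n 0 1 f 1 g] by simp

lemma Ex_cong: "(\<And>e. e \<in> configs n \<Longrightarrow> f e = g e) \<Longrightarrow> Ex n f = Ex n g"
  unfolding Ex_def by (simp cong: sum.cong)

lemma bij_upd:
  assumes "1 \<le> a" "a \<le> n" "1 \<le> b" "b \<le> n"
  shows "bij_betw (\<lambda>e. upd e a b v) {e \<in> configs n. e a b = (\<not> v)} {e \<in> configs n. e a b = v}"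
proof (rule bij_betw_byWitness[where f'="\<lambda>e. upd e a b (\<not> v)"])
  show "\<forall>x\<in>{e \<in> configs n. e a b = (\<not> v)}. upd (upd x a b v) a b (\<not> v) = x"
    by (auto simp: upd_def fun_eq_iff)
  show "\<forall>x\<in>{e \<in> configs n. e a b = v}. upd (upd x a b (\<not> v)) a b v = x"
    by (auto simp: upd_def fun_eq_iff)
  show "(\<lambda>e. upd e a b v) ` {e \<in> configs n. e a b = (\<not> v)} \<subseteq> {e \<in> configs n. e a b = v}"
    using assms by (auto simp: upd_def configs_def)
  show "(\<lambda>e. upd e a b (\<not> v)) ` {e \<in> configs n. e a b = v} \<subseteq> {e \<in> configs n. e a b = (\<not> v)}"
    using assms by (auto simp: upd_def configs_def)
qed

lemma sum_split:
  fixes F :: "(nat \<Rightarrow> nat \<Rightarrow> bool) \<Rightarrow> real"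
  shows "(\<Sum>e\<in>configs n. F e) = (\<Sum>e\<in>{e \<in> configs n. e a b = v}. F e) + (\<Sum>e\<in>{e \<in> configs n. e a b = (\<not> v)}. F e)"
proof -
  have fin: "finite (configs n)" by (rule configs_finite)
  have split: "configs n = {e \<in> configs n. e a b = v} \<union> {e \<in> configs n. e a b = (\<not> v)}" by auto
  have "(\<Sum>e\<in>{e \<in> configs n. e a b = v} \<union> {e \<in> configs n. e a b = (\<not> v)}. F e)
     = (\<Sum>e\<in>{e \<in> configs n. e a b = v}. F e) + (\<Sum>e\<in>{e \<in> configs n. e a b = (\<not> v)}. F e)"
    by (rule sum.union_disjoint) (use fin in auto)
  then show ?thesis using split by simp
qed

lemma sum_upd:
  fixes F :: "(nat \<Rightarrow> nat \<Rightarrow> bool) \<Rightarrow> real"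
  assumes "1 \<le> a" "a \<le> n" "1 \<le> b" "b \<le> n"
  shows "(\<Sum>e\<in>configs n. F (upd e a b v)) = 2 * (\<Sum>e\<in>{e \<in> configs n. e a b = v}. F e)"
proof -
  have s: "(\<Sum>e\<in>configs n. F (upd e a b v)) =
     (\<Sum>e\<in>{e \<in> configs n. e a b = v}. F (upd e a b v)) + (\<Sum>e\<in>{e \<in> configs n. e a b = (\<not> v)}. F (upd e a b v))"
    by (rule sum_split)
  have s1: "(\<Sum>e\<in>{e \<in> configs n. e a b = v}. F (upd e a b v)) = (\<Sum>e\<in>{e \<in> configs n. e a b = v}. F e)"
  proof (rule sum.cong)
    fix e assume "e \<in> {e \<in> configs n. e a b = v}"
    then have "upd e a b v = e" by (auto simp: upd_def fun_eq_iff)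
    then show "F (upd e a b v) = F e" by simp
  qed simp
  have s2: "(\<Sum>e\<in>{e \<in> configs n. e a b = (\<not> v)}. F (upd e a b v)) = (\<Sum>e\<in>{e \<in> configs n. e a b = v}. F e)"
    using sum.reindex_bij_betw[OF bij_upd[OF assms, of v], of F] .
  show ?thesis unfolding s s1 s2 by simp
qed

lemma upd_same [simp]: "upd e a b v a b = v"
  by (simp add: upd_def)

lemma Ex_flip0:
  assumes "1 \<le> a" "a \<le> n" "1 \<le> b" "b \<le> n"
  shows "Ex n F = (Ex n (\<lambda>e. F (upd e a b True)) + Ex n (\<lambda>e. F (upd e a b False))) / 2"
proof -
  have "(\<Sum>e\<in>configs n. F e) = (\<Sum>e\<in>{e \<in> configs n. e a b = True}. F e) + (\<Sum>e\<in>{e \<in> configs n. e a b = (\<not> True)}. F e)"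
    by (rule sum_split)
  moreover have "(\<Sum>e\<in>configs n. F (upd e a b True)) = 2 * (\<Sum>e\<in>{e \<in> configs n. e a b = True}. F e)"
    by (rule sum_upd[OF assms])
  moreover have "(\<Sum>e\<in>configs n. F (upd e a b False)) = 2 * (\<Sum>e\<in>{e \<in> configs n. e a b = (\<not> True)}. F e)"
    using sum_upd[OF assms, of F False] by simp
  ultimately show ?thesis unfolding Ex_def by (simp add: add_divide_distrib)
qed

lemma Ex_flip:
  assumes "1 \<le> a" "a \<le> n" "1 \<le> b" "b \<le> n" "\<And>e v. \<Phi> (upd e a b v) = \<Phi> e"
  shows "Ex n (\<lambda>e. K (\<Phi> e) (e a b)) = Ex n (\<lambda>e. (K (\<Phi> e) True + K (\<Phi> e) False) / 2)"
proof -
  have "Ex n (\<lambda>e. K (\<Phi> e) (e a b)) = (Ex n (\<lambda>e. K (\<Phi> e) True) + Ex n (\<lambda>e. K (\<Phi> e) False)) / 2"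
    using Ex_flip0[OF assms(1-4), of "\<lambda>e. K (\<Phi> e) (e a b)"] by (simp add: assms(5))
  also have "\<dots> = Ex n (\<lambda>e. (K (\<Phi> e) True + K (\<Phi> e) False) / 2)"
    using Ex_lin[of n 0 "1/2" "\<lambda>e. K (\<Phi> e) True" "1/2" "\<lambda>e. K (\<Phi> e) False"]
    by (simp add: add_divide_distrib)
  finally show ?thesis .
qed

lemma upd_other [simp]: "i \<noteq> a \<or> j \<noteq> b \<Longrightarrow> upd e a b v i j = e i j"
  by (auto simp: upd_def)
lemma st_indep: "Suc i < a \<or> Suc i < b \<or> (a = Suc i \<and> b = Suc i) \<Longrightarrow> st (upd e a b v) i = st e i"
proof (induction i)
  case 0 then show ?case by simp
next
  case (Suc i)
  have "st (upd e a b v) i = st e i" using Suc by auto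
  moreover have "upd e a b v (Suc i) (Suc i) = e (Suc i) (Suc i)" using Suc.prems by auto
  moreover have "upd e a b v (Suc i) (Suc (Suc i)) = e (Suc i) (Suc (Suc i))" using Suc.prems by auto
  moreover have "upd e a b v (Suc (Suc i)) (Suc i) = e (Suc (Suc i)) (Suc i)" using Suc.prems by auto
  ultimately show ?case by simp
qed

lemma Ex_decomp:
  assumes "H (True, False) = h" "H (False, True) = h"
  shows "Ex n (\<lambda>e. H (st e i)) = h + (H (False, False) - h) * Ex n (\<lambda>e. of_bool (st e i = (False, False)))
      + (H (True, True) - h) * Ex n (\<lambda>e. of_bool (st e i = (True, True)))"
proof -
  have "H (st e i) = h + (H (False, False) - h) * of_bool (st e i = (False, False))
      + (H (True, True) - h) * of_bool (st e i = (True, True))" for e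
  proof -
    obtain u l where s: "st e i = (u, l)" by (cases "st e i")
    show ?thesis using assms by (cases u; cases l) (simp_all add: s)
  qed
  then have "Ex n (\<lambda>e. H (st e i)) = Ex n (\<lambda>e. h + (H (False, False) - h) * of_bool (st e i = (False, False))
      + (H (True, True) - h) * of_bool (st e i = (True, True)))" by simp
  then show ?thesis by (simp only: Ex_lin)
qed

definition T8 :: "(bool \<times> bool \<Rightarrow> real) \<Rightarrow> bool \<times> bool \<Rightarrow> real" where
  "T8 G s = ((((G (stepf s True True True) + G (stepf s False True True)) / 2
       + (G (stepf s True False True) + G (stepf s False False True)) / 2) / 2)
     + (((G (stepf s True True False) + G (stepf s False True False)) / 2
       + (G (stepf s True False False) + G (stepf s False False False)) / 2) / 2)) / 2"

lemma Ex_trans: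
  assumes "Suc (Suc i) \<le> n"
  shows "Ex n (\<lambda>e. G (st e (Suc i))) = Ex n (\<lambda>e. T8 G (st e i))"
proof -
  let ?a = "Suc i" and ?b = "Suc (Suc i)"
  define K1 where "K1 = (\<lambda>(s, y, z) x. G (stepf s x y z))"
  define K2 where "K2 = (\<lambda>(s, z) y. (G (stepf s True y z) + G (stepf s False y z)) / 2)"
  define K3 where "K3 = (\<lambda>s z. ((G (stepf s True True z) + G (stepf s False True z)) / 2
       + (G (stepf s True False z) + G (stepf s False False z)) / 2) / 2)"
  have "Ex n (\<lambda>e. G (st e (Suc i))) = Ex n (\<lambda>e. K1 (st e i, e ?a ?b, e ?b ?a) (e ?a ?a))"
    by (simp add: K1_def)
  also have "\<dots> = Ex n (\<lambda>e. (K1 (st e i, e ?a ?b, e ?b ?a) True + K1 (st e i, e ?a ?b, e ?b ?a) False) / 2)"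
    by (rule Ex_flip) (use assms in \<open>simp_all add: st_indep\<close>)
  also have "\<dots> = Ex n (\<lambda>e. K2 (st e i, e ?b ?a) (e ?a ?b))"
    by (simp add: K1_def K2_def)
  also have "\<dots> = Ex n (\<lambda>e. (K2 (st e i, e ?b ?a) True + K2 (st e i, e ?b ?a) False) / 2)"
    by (rule Ex_flip) (use assms in \<open>simp_all add: st_indep\<close>)
  also have "\<dots> = Ex n (\<lambda>e. K3 (st e i) (e ?b ?a))"
    by (simp add: K2_def K3_def)
  also have "\<dots> = Ex n (\<lambda>e. (K3 (st e i) True + K3 (st e i) False) / 2)"
    by (rule Ex_flip) (use assms in \<open>simp_all add: st_indep\<close>)
  also have "\<dots> = Ex n (\<lambda>e. T8 G (st e i))"
    by (rule Ex_cong) (simp add: K3_def T8_def)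
  finally show ?thesis .
qed

fun xs :: "nat \<Rightarrow> real" and ys :: "nat \<Rightarrow> real" where
  "xs 0 = 1"
| "ys 0 = 0"
| "xs (Suc i) = 1/2 + xs i / 8 - ys i / 4"
| "ys (Suc i) = xs i / 8 + ys i / 4"

lemma probs: "Suc i \<le> n \<Longrightarrow> Ex n (\<lambda>e. of_bool (st e i = (False, False))) = xs i
   \<and> Ex n (\<lambda>e. of_bool (st e i = (True, True))) = ys i"
proof (induction i)
  case 0
  have "Ex n (\<lambda>e. 1) = 1" using Ex_lin[of n 1 0 "\<lambda>_. 0" 0 "\<lambda>_. 0"] by simp
  moreover have "Ex n (\<lambda>e. 0) = 0" using Ex_lin[of n 0 0 "\<lambda>_. 0" 0 "\<lambda>_. 0"] by simp
  ultimately show ?case by simp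
next
  case (Suc i)
  then have ih: "Ex n (\<lambda>e. of_bool (st e i = (False, False))) = xs i"
     "Ex n (\<lambda>e. of_bool (st e i = (True, True))) = ys i" by auto
  have "Ex n (\<lambda>e. of_bool (st e (Suc i) = (False, False))) = Ex n (\<lambda>e. T8 (\<lambda>s. of_bool (s = (False, False))) (st e i))"
    using Ex_trans[OF Suc.prems] .
  also have "\<dots> = xs (Suc i)"
    by (subst Ex_decomp[where h="1/2"]) (simp_all add: T8_def stepf_def ih)
  finally have 1: "Ex n (\<lambda>e. of_bool (st e (Suc i) = (False, False))) = xs (Suc i)" .
  have "Ex n (\<lambda>e. of_bool (st e (Suc i) = (True, True))) = Ex n (\<lambda>e. T8 (\<lambda>s. of_bool (s = (True, True))) (st e i))"
    using Ex_trans[OF Suc.prems] .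
  also have "\<dots> = ys (Suc i)"
    by (subst Ex_decomp[where h="0"]) (simp_all add: T8_def stepf_def ih)
  finally show ?case using 1 by simp
qed

lemma EDv: "k \<le> n \<Longrightarrow> Ex n (\<lambda>e. real (Dv e k)) = (\<Sum>i<k. 1 - xs i / 2)"
proof (induction k)
  case 0
  show ?case using Ex_lin[of n 0 0 "\<lambda>_. 0" 0 "\<lambda>_. 0"] by simp
next
  case (Suc k)
  have inc: "Ex n (\<lambda>e. of_bool (fst (st e k) \<or> snd (st e k) \<or> e (Suc k) (Suc k))) = 1 - xs k / 2"
  proof -
    have "Ex n (\<lambda>e. of_bool (fst (st e k) \<or> snd (st e k) \<or> e (Suc k) (Suc k)))
        = Ex n (\<lambda>e. (of_bool (fst (st e k) \<or> snd (st e k) \<or> True) + of_bool (fst (st e k) \<or> snd (st e k) \<or> False)) / 2)"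
      by (rule Ex_flip[where K="\<lambda>s x. of_bool (fst s \<or> snd s \<or> x)" and \<Phi>="\<lambda>e. st e k"])
         (use Suc.prems in \<open>auto simp: st_indep\<close>)
    also have "\<dots> = 1 - xs k / 2"
      by (subst Ex_decomp[where h="1"]) (simp_all add: probs[of k n] Suc.prems)
    finally show ?thesis .
  qed
  have "Ex n (\<lambda>e. real (Dv e (Suc k))) = Ex n (\<lambda>e. real (Dv e k) + of_bool (fst (st e k) \<or> snd (st e k) \<or> e (Suc k) (Suc k)))"
    by (rule arg_cong[where f="Ex n"]) (auto simp: fun_eq_iff)
  also have "\<dots> = Ex n (\<lambda>e. real (Dv e k)) + (1 - xs k / 2)"
    by (simp only: Ex_add inc)
  finally show ?case using Suc by simp
qed

lemma EL_xs: "EL n 1 = (\<Sum>i<n. 1 - xs i / 2)"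
  unfolding EL_def R_Dv using EDv[of n n] by (simp add: Ex_def)

lemma xs_rec: "xs (Suc n) - 6/11 = (xs n - 6/11) / 8 - (ys n - 1/11) / 4"
  and ys_rec: "ys (Suc n) - 1/11 = (xs n - 6/11) / 8 + (ys n - 1/11) / 4"
  by (simp_all add: field_simps)

lemma err_eq: "(\<Sum>i<n. 1 - xs i / 2) - (8/11 * real n - 32/121) = 6/11 * (xs n - 6/11) - 2/11 * (ys n - 1/11)"
proof (induction n)
  case 0 then show ?case by simp
next
  case (Suc n)
  then show ?case by (simp add: field_simps)
qed

lemma inv: "2 * (xs n - 6/11)^2 + 2 * (xs n - 6/11) * (ys n - 1/11) + 4 * (ys n - 1/11)^2 = 4/11 * (1/16)^n"
proof (induction n)
  case 0 then show ?case by (simp add: power2_eq_square)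
next
  case (Suc n)
  define X where "X = xs n - 6/11"
  define Y where "Y = ys n - 1/11"
  have e: "2 * (X/8 - Y/4)^2 + 2 * (X/8 - Y/4) * (X/8 + Y/4) + 4 * (X/8 + Y/4)^2
     = (2 * X^2 + 2 * X * Y + 4 * Y^2) / 16"
    by (simp add: power2_eq_square algebra_simps)
  show ?case unfolding xs_rec ys_rec using e Suc by (simp add: X_def Y_def)
qed

lemma err_bound: "\<bar>(\<Sum>i<n. 1 - xs i / 2) - (8/11 * real n - 32/121)\<bar> \<le> (1/4)^n"
proof -
  define X where "X = xs n - 6/11"
  define Y where "Y = ys n - 1/11"
  have q: "2 * X^2 + 2 * X * Y + 4 * Y^2 = 4/11 * (1/16)^n" using inv[of n] by (simp add: X_def Y_def)
  have p: "((1/4::real)^n)^2 = (1/16)^n" by (simp add: power_mult_distrib[symmetric] power2_eq_square power_mult[symmetric] mult.commute)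
  have "X^2 \<le> 2 * X^2 + 2 * X * Y + 4 * Y^2"
  proof -
    have "0 \<le> (X + Y)^2 + 3 * Y^2" by simp
    then show ?thesis by (simp add: power2_eq_square algebra_simps)
  qed
  moreover have "0 \<le> (1/16::real)^n" by simp
  ultimately have "X^2 \<le> ((1/4::real)^n)^2" using q p by linarith
  then have hx: "\<bar>X\<bar> \<le> (1/4)^n" using abs_le_square_iff[of X "(1/4::real)^n"] by simp
  have "3 * Y^2 \<le> 2 * X^2 + 2 * X * Y + 4 * Y^2"
  proof -
    have "0 \<le> (X + Y)^2 + X^2" by simp
    then show ?thesis by (simp add: power2_eq_square algebra_simps)
  qed
  moreover have "0 \<le> (1/16::real)^n" by simp
  ultimately have "Y^2 \<le> ((1/4::real)^n)^2" using q p by linarith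
  then have hy: "\<bar>Y\<bar> \<le> (1/4)^n" using abs_le_square_iff[of Y "(1/4::real)^n"] by simp
  have "\<bar>6/11 * X - 2/11 * Y\<bar> \<le> (1/4)^n" using hx hy by linarith
  then show ?thesis unfolding err_eq X_def Y_def .
qed

theorem mainTheorem3:
  shows "(\<lambda>n. EL n 1 - (8/11 * real n - 32/121)) \<in> O(\<lambda>n. real n * 2 powr (- 2 * real n))
         \<and> (\<lambda>n. EL n 1 / real n) \<longlonglongrightarrow> 8/11"
proof
  have pw: "2 powr (- 2 * real n) = (1/4::real)^n" for n :: nat
  proof -
    have "2 powr (- 2 * real n) = inverse (2 powr (real (2 * n)))"
      by (simp add: powr_minus)
    also have "2 powr (real (2 * n)) = (2::real) ^ (2 * n)" by (rule powr_realpow) simp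
    also have "(2::real) ^ (2 * n) = 4 ^ n" by (simp add: power_mult)
    also have "inverse ((4::real) ^ n) = (1/4)^n" by (simp add: power_one_over inverse_eq_divide)
    finally show ?thesis .
  qed
  show "(\<lambda>n. EL n 1 - (8/11 * real n - 32/121)) \<in> O(\<lambda>n. real n * 2 powr (- 2 * real n))"
  proof (rule bigoI[where c=1])
    show "\<forall>\<^sub>F n in at_top. norm (EL n 1 - (8/11 * real n - 32/121)) \<le> 1 * norm (real n * 2 powr (- 2 * real n))"
      using eventually_ge_at_top[of "1::nat"]
    proof (rule eventually_mono)
      fix n :: nat assume n: "1 \<le> n"
      have "norm (EL n 1 - (8/11 * real n - 32/121)) \<le> (1/4)^n"
        using err_bound[of n] unfolding EL_xs by simp
      also have "\<dots> \<le> real n * (1/4)^n" using n by simp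
      finally show "norm (EL n 1 - (8/11 * real n - 32/121)) \<le> 1 * norm (real n * 2 powr (- 2 * real n))"
        unfolding pw by simp
    qed
  qed
  have z: "(\<lambda>n. (EL n 1 - (8/11 * real n - 32/121) - 32/121) / real n) \<longlonglongrightarrow> 0"
  proof (rule tendsto_0_le[where K=1])
    show "(\<lambda>n. 2 / real n) \<longlonglongrightarrow> 0" by (rule lim_const_over_n)
    show "\<forall>\<^sub>F n in sequentially. norm ((EL n 1 - (8/11 * real n - 32/121) - 32/121) / real n) \<le> norm (2 / real n) * 1"
    proof (rule always_eventually, rule allI)
      fix n :: nat
      have "\<bar>EL n 1 - (8/11 * real n - 32/121)\<bar> \<le> 1"
        using err_bound[of n] power_le_one[of "1/4::real" n] unfolding EL_xs by linarith
      then have "\<bar>EL n 1 - (8/11 * real n - 32/121) - 32/121\<bar> \<le> 2" by linarith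
      then show "norm ((EL n 1 - (8/11 * real n - 32/121) - 32/121) / real n) \<le> norm (2 / real n) * 1"
        by (simp add: divide_right_mono)
    qed
  qed
  then have "(\<lambda>n. 8/11 + (EL n 1 - (8/11 * real n - 32/121) - 32/121) / real n) \<longlonglongrightarrow> 8/11 + 0"
    by (intro tendsto_add tendsto_const)
  then have lim: "(\<lambda>n. 8/11 + (EL n 1 - (8/11 * real n - 32/121) - 32/121) / real n) \<longlonglongrightarrow> 8/11"
    by simp
  have ev: "\<forall>\<^sub>F n in sequentially. 8/11 + (EL n 1 - (8/11 * real n - 32/121) - 32/121) / real n = EL n 1 / real n"
    using eventually_ge_at_top[of "1::nat"]
    by (rule eventually_mono) (simp add: field_simps)
  show "(\<lambda>n. EL n 1 / real n) \<longlonglongrightarrow> 8/11"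
    by (rule Lim_transform_eventually[OF lim ev])
qed

end
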